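(* Consider an MLP with a single hidden layer of width $d_h\ge 2$, input dimension $d_i$ and output dimension $d_o$, with weight space $\mathcal{W}=\mathbb{R}^{d_h\times d_i}\oplus\mathbb{R}^{d_h}\oplus\mathbb{R}^{d_o\times d_h}\oplus\mathbb{R}^{d_o}$ (weights $\boldsymbol{\omega}=(\mathbf{W}_1,\mathbf{b}_1,\mathbf{W}_2,\mathbf{b}_2)$) equipped with the Euclidean norm, and let $G=S_{d_h}$ act on $\mathcal{W}$ by $\tau\cdot(\mathbf{W}_1,\mathbf{b}_1,\mathbf{W}_2,\mathbf{b}_2)=(\mathbf{P}_\tau^\top\mathbf{W}_1,\mathbf{P}_\tau^\top\mathbf{b}_1,\mathbf{W}_2\mathbf{P}_\tau,\mathbf{b}_2)$, where $\mathbf{P}_\tau$ is the permutation matrix of $\tau$. Then for every $\boldsymbol{\omega}\in\mathcal{W}$ there exists a non-identity $g\in G$ such that $$\lVert\boldsymbol{\omega}-g\cdot\boldsymbol{\omega}\rVert_2=\mathcal{O}\!\left(\frac{d_i+d_o}{\log(d_h)}\lVert\boldsymbol{\omega}\rVert_2\right),$$ where the implied constant is independent of $\boldsymbol{\omega}$, $d_i$, $d_o$, $d_h$. *)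

theory Defs
  imports Complex_Main "HOL-Combinatorics.Permutations"
begin

text \<open>Matrices are functions
  nat => nat => real (row index first), vectors nat => real; only the entries
  inside the index ranges given by the dimensions d_i, d_h, d_o are meaningful.\<close>
type_synonym weights = "(nat \<Rightarrow> nat \<Rightarrow> real) \<times> (nat \<Rightarrow> real) \<times> (nat \<Rightarrow> nat \<Rightarrow> real) \<times> (nat \<Rightarrow> real)"

definition perm_mat :: "(nat \<Rightarrow> nat) \<Rightarrow> nat \<Rightarrow> nat \<Rightarrow> real" where
  "perm_mat \<tau> i j = (if i = \<tau> j then 1 else 0)"

text \<open>Action tau . (W1,b1,W2,b2) = (P^T W1, P^T b1, W2 P, b2), with matrix products
  over the hidden index range {..<dh}.\<close>
definition perm_act :: "nat \<Rightarrow> (nat \<Rightarrow> nat) \<Rightarrow> weights \<Rightarrow> weights" where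
  "perm_act dh \<tau> w = (case w of (W1, b1, W2, b2) \<Rightarrow>
     ((\<lambda>i k. \<Sum>j<dh. perm_mat \<tau> j i * W1 j k),
      (\<lambda>i. \<Sum>j<dh. perm_mat \<tau> j i * b1 j),
      (\<lambda>r j. \<Sum>i<dh. W2 r i * perm_mat \<tau> i j),
      b2))"

definition wdiff :: "weights \<Rightarrow> weights \<Rightarrow> weights" where
  "wdiff v w = (case v of (W1, b1, W2, b2) \<Rightarrow> case w of (V1, c1, V2, c2) \<Rightarrow>
     ((\<lambda>i k. W1 i k - V1 i k), (\<lambda>i. b1 i - c1 i), (\<lambda>r j. W2 r j - V2 r j), (\<lambda>r. b2 r - c2 r)))"

definition wnorm :: "nat \<Rightarrow> nat \<Rightarrow> nat \<Rightarrow> weights \<Rightarrow> real" where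
  "wnorm din dh dout w = (case w of (W1, b1, W2, b2) \<Rightarrow>
     sqrt ((\<Sum>i<dh. \<Sum>k<din. (W1 i k)\<^sup>2) + (\<Sum>i<dh. (b1 i)\<^sup>2)
         + (\<Sum>r<dout. \<Sum>j<dh. (W2 r j)\<^sup>2) + (\<Sum>r<dout. (b2 r)\<^sup>2)))"

end

theory Submission imports Defs begin

lemma sel1:
  assumes "\<tau> permutes {..<dh}" "i < dh"
  shows "(\<Sum>j<dh. perm_mat \<tau> j i * f j) = f (\<tau> i)"
proof -
  have "\<tau> i < dh" using assms permutes_in_image by fastforce
  have "(\<Sum>j<dh. perm_mat \<tau> j i * f j) = (\<Sum>j<dh. if j = \<tau> i then f j else 0)"
    by (rule sum.cong) (auto simp: perm_mat_def)
  then show ?thesis using \<open>\<tau> i < dh\<close> by simp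
qed

lemma sel2:
  assumes "\<tau> permutes {..<dh}" "i < dh"
  shows "(\<Sum>j<dh. f j * perm_mat \<tau> j i) = f (\<tau> i)"
  using sel1[OF assms, of f] by (simp add: mult.commute)

lemma diffsq:
  assumes "\<tau> permutes {..<dh}"
  shows "(wnorm din dh dout (wdiff (W1,b1,W2,b2) (perm_act dh \<tau> (W1,b1,W2,b2))))\<^sup>2
    = (\<Sum>i<dh. (\<Sum>k<din. (W1 i k - W1 (\<tau> i) k)\<^sup>2) + (b1 i - b1 (\<tau> i))\<^sup>2
        + (\<Sum>r<dout. (W2 r i - W2 r (\<tau> i))\<^sup>2))"
proof -
  have e1: "(\<Sum>i<dh. \<Sum>k<din. (W1 i k - (\<Sum>j<dh. perm_mat \<tau> j i * W1 j k))\<^sup>2)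
     = (\<Sum>i<dh. \<Sum>k<din. (W1 i k - W1 (\<tau> i) k)\<^sup>2)"
    by (rule sum.cong) (simp_all add: sel1[OF assms])
  have e2: "(\<Sum>i<dh. (b1 i - (\<Sum>j<dh. perm_mat \<tau> j i * b1 j))\<^sup>2)
     = (\<Sum>i<dh. (b1 i - b1 (\<tau> i))\<^sup>2)"
    by (rule sum.cong) (simp_all add: sel1[OF assms])
  have e3: "(\<Sum>r<dout. \<Sum>j<dh. (W2 r j - (\<Sum>i<dh. W2 r i * perm_mat \<tau> i j))\<^sup>2)
     = (\<Sum>i<dh. \<Sum>r<dout. (W2 r i - W2 r (\<tau> i))\<^sup>2)"
    by (subst sum.swap, rule sum.cong) (simp_all add: sel2[OF assms])
  have nn: "0 \<le> (\<Sum>i<dh. \<Sum>k<din. (W1 i k - W1 (\<tau> i) k)\<^sup>2) + (\<Sum>i<dh. (b1 i - b1 (\<tau> i))\<^sup>2)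
     + (\<Sum>i<dh. \<Sum>r<dout. (W2 r i - W2 r (\<tau> i))\<^sup>2) + (\<Sum>r<dout. (b2 r - b2 r)\<^sup>2)"
    by (intro add_nonneg_nonneg sum_nonneg) auto
  show ?thesis
    unfolding wnorm_def wdiff_def perm_act_def
    using nn by (simp add: e1 e2 e3 sum.distrib)
qed


lemma main:
  fixes W1 :: "nat \<Rightarrow> nat \<Rightarrow> real" and b1 :: "nat \<Rightarrow> real" and W2 :: "nat \<Rightarrow> nat \<Rightarrow> real"
    and b2 :: "nat \<Rightarrow> real" and din dh dout :: nat
  assumes dh: "dh \<ge> 2" and din: "din \<ge> 1" and dout: "dout \<ge> 1"
  shows "\<exists>\<tau>. \<tau> permutes {..<dh} \<and> \<tau> \<noteq> id \<and>
     wnorm din dh dout (wdiff (W1,b1,W2,b2) (perm_act dh \<tau> (W1,b1,W2,b2)))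
       \<le> 4 * (real (din + dout) / ln (real dh)) * wnorm din dh dout (W1,b1,W2,b2)"
proof -
  define n where "n i = (\<Sum>k<din. (W1 i k)\<^sup>2) + (b1 i)\<^sup>2 + (\<Sum>r<dout. (W2 r i)\<^sup>2)" for i
  define d where "d i j = (\<Sum>k<din. (W1 i k - W1 j k)\<^sup>2) + (b1 i - b1 j)\<^sup>2
        + (\<Sum>r<dout. (W2 r i - W2 r j)\<^sup>2)" for i j
  define S where "S = (wnorm din dh dout (W1,b1,W2,b2))\<^sup>2"
  have nn0: "n i \<ge> 0" for i unfolding n_def by (intro add_nonneg_nonneg sum_nonneg) auto
  have S_eq: "S = (\<Sum>i<dh. n i) + (\<Sum>r<dout. (b2 r)\<^sup>2)"
  proof -
    have "0 \<le> (\<Sum>i<dh. \<Sum>k<din. (W1 i k)\<^sup>2) + (\<Sum>i<dh. (b1 i)\<^sup>2) +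
         (\<Sum>r<dout. \<Sum>j<dh. (W2 r j)\<^sup>2) + (\<Sum>r<dout. (b2 r)\<^sup>2)"
      by (intro add_nonneg_nonneg sum_nonneg) auto
    then show ?thesis unfolding S_def wnorm_def n_def
      by (simp add: sum.distrib sum.swap[of _ "{..<dout}"])
  qed
  have Sge: "(\<Sum>i<dh. n i) \<le> S" unfolding S_eq by (simp add: sum_nonneg)
  have dle: "d i j \<le> 2 * (n i + n j)" for i j
  proof -
    have q: "(x - y)\<^sup>2 \<le> 2 * x\<^sup>2 + 2 * y\<^sup>2" for x y :: real
      using sum_squares_ge_zero[of "x+y" 0] by (simp add: power2_eq_square algebra_simps)
    have "(\<Sum>k<din. (W1 i k - W1 j k)\<^sup>2) \<le> (\<Sum>k<din. 2 * (W1 i k)\<^sup>2 + 2 * (W1 j k)\<^sup>2)"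
      by (rule sum_mono) (rule q)
    moreover have "(\<Sum>r<dout. (W2 r i - W2 r j)\<^sup>2) \<le> (\<Sum>r<dout. 2 * (W2 r i)\<^sup>2 + 2 * (W2 r j)\<^sup>2)"
      by (rule sum_mono) (rule q)
    moreover have "(b1 i - b1 j)\<^sup>2 \<le> 2 * (b1 i)\<^sup>2 + 2 * (b1 j)\<^sup>2" by (rule q)
    ultimately show ?thesis unfolding d_def n_def
      by (simp add: sum.distrib sum_distrib_left[symmetric] algebra_simps)
  qed
  have dsym: "d i j = d j i" for i j unfolding d_def by (simp add: power2_commute)
  have d0: "d i i = 0" for i unfolding d_def by simp
  \<comment> \<open>choose two neurons of smallest norm\<close>
  obtain a where a: "a < dh" "\<And>i. i < dh \<Longrightarrow> n a \<le> n i"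
  proof -
    have "Min (n ` {..<dh}) \<in> n ` {..<dh}" using dh by (intro Min_in) (auto simp: lessThan_empty_iff)
    then obtain a where "a < dh" "n a = Min (n ` {..<dh})" by auto
    then show ?thesis using that by (metis Min_le finite_imageI finite_lessThan imageI lessThan_iff)
  qed
  obtain b where b: "b < dh" "b \<noteq> a" "\<And>i. i < dh \<Longrightarrow> i \<noteq> a \<Longrightarrow> n b \<le> n i"
  proof -
    have ne: "{..<dh} - {a} \<noteq> {}" using dh a(1)
      by (metis Diff_empty Diff_insert0 One_nat_def insert_Diff lessThan_iff less_2_cases_iff
          less_le_trans not_less_eq numeral_2_eq_2 singletonD)
    have "Min (n ` ({..<dh} - {a})) \<in> n ` ({..<dh} - {a})" using ne by (intro Min_in) auto
    then obtain b where b1: "b \<in> {..<dh} - {a}" and b2: "n b = Min (n ` ({..<dh} - {a}))" by (metis imageE)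
    have "n b \<le> n i" if "i < dh" "i \<noteq> a" for i
      unfolding b2 using that by (intro Min_le) auto
    then show ?thesis using that b1 by blast
  qed
  have cardr: "card ({..<dh} - {a}) = dh - 1" using a(1) by simp
  have sumsplit: "(\<Sum>i<dh. n i) = n a + (\<Sum>i\<in>{..<dh} - {a}. n i)"
    using a(1) by (simp add: sum.remove)
  have "real (card ({..<dh} - {a})) * n b \<le> (\<Sum>i\<in>{..<dh} - {a}. n i)"
    by (rule sum_bounded_below) (use b in auto)
  then have low: "n a + real (dh - 1) * n b \<le> S" using sumsplit Sge cardr by simp
  have ab: "n a \<le> n b" using a b by auto
  have key: "real dh * (n a + n b) \<le> 2 * S"
  proof -
    have "(real dh - 2) * n a \<le> (real dh - 2) * n b" using ab dh by (intro mult_left_mono) auto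
    then show ?thesis using low dh by (simp add: of_nat_diff algebra_simps)
  qed
  define \<tau> where "\<tau> = Transposition.transpose a b"
  have perm: "\<tau> permutes {..<dh}" unfolding \<tau>_def using a b by (intro permutes_swap_id) auto
  have ne: "\<tau> \<noteq> id" unfolding \<tau>_def using b(2) by (metis id_apply transpose_apply_first)
  have sum2: "(\<Sum>i<dh. d i (\<tau> i)) = 2 * d a b"
  proof -
    have "(\<Sum>i\<in>{a,b}. d i (\<tau> i)) = (\<Sum>i<dh. d i (\<tau> i))"
      using a b by (intro sum.mono_neutral_left) (auto simp: \<tau>_def d0 transpose_def)
    then show ?thesis using b(2) by (simp add: \<tau>_def dsym del: transpose_def)
  qed
  have D2: "(wnorm din dh dout (wdiff (W1,b1,W2,b2) (perm_act dh \<tau> (W1,b1,W2,b2))))\<^sup>2 \<le> 8 * S / real dh"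
  proof -
    have "(wnorm din dh dout (wdiff (W1,b1,W2,b2) (perm_act dh \<tau> (W1,b1,W2,b2))))\<^sup>2 = 2 * d a b"
      using diffsq[OF perm, of din dout W1 b1 W2 b2] sum2 unfolding d_def by simp
    also have "\<dots> \<le> 4 * (n a + n b)" using dle[of a b] by simp
    also have "\<dots> \<le> 8 * S / real dh" using key dh by (simp add: field_simps)
    finally show ?thesis .
  qed
  have wn0: "wnorm din dh dout (wdiff (W1,b1,W2,b2) (perm_act dh \<tau> (W1,b1,W2,b2))) \<ge> 0"
    unfolding wnorm_def wdiff_def perm_act_def by (simp add: add_nonneg_nonneg sum_nonneg)
  have Snn: "S \<ge> 0" unfolding S_def by simp
  have w0: "wnorm din dh dout (W1,b1,W2,b2) \<ge> 0" unfolding wnorm_def by (simp add: add_nonneg_nonneg sum_nonneg)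
  have D: "wnorm din dh dout (wdiff (W1,b1,W2,b2) (perm_act dh \<tau> (W1,b1,W2,b2)))
       \<le> sqrt (8 / real dh) * wnorm din dh dout (W1,b1,W2,b2)"
  proof -
    have "wnorm din dh dout (wdiff (W1,b1,W2,b2) (perm_act dh \<tau> (W1,b1,W2,b2))) \<le> sqrt (8 * S / real dh)"
      using D2 wn0 real_le_rsqrt by blast
    also have "\<dots> = sqrt (8 / real dh) * sqrt S" by (simp add: real_sqrt_mult[symmetric])
    also have "sqrt S = wnorm din dh dout (W1,b1,W2,b2)" unfolding S_def using w0 by simp
    finally show ?thesis .
  qed
  have lnpos: "ln (real dh) > 0" using dh by simp
  have lnb: "ln (real dh) \<le> 2 * sqrt (real dh)"
  proof -
    have "ln (real dh) = 2 * ln (sqrt (real dh))" using dh by (simp add: ln_sqrt)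
    also have "\<dots> \<le> 2 * (sqrt (real dh) - 1)" using dh by (intro mult_left_mono ln_le_minus_one) auto
    finally show ?thesis by simp
  qed
  have coef: "sqrt (8 / real dh) \<le> 4 * (real (din + dout) / ln (real dh))"
  proof -
    have s8: "sqrt 8 \<le> (3::real)" by (rule real_le_lsqrt) auto
    have "sqrt (8 / real dh) * ln (real dh) \<le> sqrt (8 / real dh) * (2 * sqrt (real dh))"
      using lnb by (intro mult_left_mono) auto
    also have "\<dots> = 2 * sqrt 8" using dh by (simp add: real_sqrt_divide)
    also have "\<dots> \<le> 4 * real (din + dout)" using s8 din dout by simp
    finally show ?thesis using lnpos by (simp add: field_simps)
  qed
  have "sqrt (8 / real dh) * wnorm din dh dout (W1,b1,W2,b2)
      \<le> 4 * (real (din + dout) / ln (real dh)) * wnorm din dh dout (W1,b1,W2,b2)"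
    using coef w0 by (rule mult_right_mono)
  then show ?thesis using D perm ne by (meson order_trans)
qed

theorem theorem3p1:
  "\<exists>C::real. \<forall>din dh dout::nat. \<forall>w::weights.
     din \<ge> 1 \<longrightarrow> dout \<ge> 1 \<longrightarrow> dh \<ge> 2 \<longrightarrow>
     (\<exists>\<tau>. \<tau> permutes {..<dh} \<and> \<tau> \<noteq> id \<and>
        wnorm din dh dout (wdiff w (perm_act dh \<tau> w))
          \<le> C * (real (din + dout) / ln (real dh)) * wnorm din dh dout w)"
proof (rule exI[of _ 4], intro allI impI)
  fix din dh dout :: nat and w :: weights
  assume "din \<ge> 1" "dout \<ge> 1" "dh \<ge> 2"
  moreover obtain W1 b1 W2 b2 where "w = (W1, b1, W2, b2)" by (cases w) auto
  ultimately show "\<exists>\<tau>. \<tau> permutes {..<dh} \<and> \<tau> \<noteq> id \<and>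
        wnorm din dh dout (wdiff w (perm_act dh \<tau> w))
          \<le> 4 * (real (din + dout) / ln (real dh)) * wnorm din dh dout w"
    using main by simp
qed

end
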